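(* Let $\mathbb{M}$ be a weight sequence with sequence of quotients $\mathbf{m}$. Then $\beta(\mathbf{m})=\frac{1}{\alpha(\nu_{\mathbf{m}})}$ and $\alpha(\mathbf{m})=\frac{1}{\beta(\nu_{\mathbf{m}})}$ (with the conventions $1/0=\infty$, $1/\infty=0$).
   Context: A weight sequence is $\mathbb{M}=(M_p)_{p\in\mathbb{N}_0}$ of positive reals with $M_0=1$, $M_p^2\le M_{p-1}M_{p+1}$ ($p\ge1$) and $M_p^{1/p}\to\infty$; $m_p=M_{p+1}/M_p$. $\nu_{\mathbf{m}}(t):=\#\{j\in\mathbb{N}_0:m_j\le t\}$ for $t>0$. For a positive measurable $f$ on $[A,\infty)$: $\alpha(f):=\inf\{\alpha:\exists C_\alpha>0\ \forall\Lambda>1,\ \limsup_{x\to\infty}\sup_{\lambda\in[1,\Lambda]}\frac{f(\lambda x)}{\lambda^{\alpha}f(x)}\le C_\alpha\}$ and $\beta(f):=\sup\{\beta:\exists D_\beta>0\ \forall\Lambda>1,\ \liminf_{x\to\infty}\inf_{\lambda\in[1,\Lambda]}\frac{f(\lambda x)}{\lambda^{\beta}f(x)}\ge D_\beta\}$ ($\inf\emptyset=\infty$, $\sup\emptyset=-\infty$); for $\nu_{\mathbf{m}}$ these are computed on $[m_0,\infty)$. For the sequence $\mathbf{m}$, $\alpha(\mathbf{m}),\beta(\mathbf{m})$ are these indices of the step function $f(x)=m_{\lfloor x\rfloor-1}$, $x\ge1$. *)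

theory Defs
  imports "HOL-Analysis.Analysis"
begin

definition weight_sequence :: "(nat \<Rightarrow> real) \<Rightarrow> bool" where
  "weight_sequence M \<longleftrightarrow> M 0 = 1 \<and> (\<forall>p. 0 < M p)
     \<and> (\<forall>p\<ge>1. (M p)\<^sup>2 \<le> M (p - 1) * M (p + 1))
     \<and> filterlim (\<lambda>p. root p (M p)) at_top sequentially"

definition quot :: "(nat \<Rightarrow> real) \<Rightarrow> nat \<Rightarrow> real" where
  "quot M p = M (Suc p) / M p"

definition nu :: "(nat \<Rightarrow> real) \<Rightarrow> real \<Rightarrow> real" where
  "nu m t = real (card {j. m j \<le> t})"

definition step_fun :: "(nat \<Rightarrow> real) \<Rightarrow> real \<Rightarrow> real" where
  "step_fun m x = m (nat (\<lfloor>x\<rfloor> - 1))"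

text \<open>Upper index alpha(f) (values in extended reals; Inf of empty set is \<infinity>).
  Only the behaviour as x tends to infinity matters, so f is given on all reals.\<close>
definition upper_index :: "(real \<Rightarrow> real) \<Rightarrow> ereal" where
  "upper_index f = Inf {ereal a | a. \<exists>C>0. \<forall>\<Lambda>>1.
      Limsup at_top (\<lambda>x. SUP l\<in>{1..\<Lambda>}. ereal (f (l * x) / (l powr a * f x))) \<le> ereal C}"

text \<open>Lower index beta(f) (Sup of empty set is -\<infinity>).\<close>
definition lower_index :: "(real \<Rightarrow> real) \<Rightarrow> ereal" where
  "lower_index f = Sup {ereal b | b. \<exists>D>0. \<forall>\<Lambda>>1.
      Liminf at_top (\<lambda>x. INF l\<in>{1..\<Lambda>}. ereal (f (l * x) / (l powr b * f x))) \<ge> ereal D}"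

end

theory Submission imports Defs begin

lemma index_inverse:
  fixes A B :: "real set"
  assumes Aup: "\<And>a a'. a \<in> A \<Longrightarrow> a \<le> a' \<Longrightarrow> a' \<in> A"
    and Anonneg: "\<And>a. a \<in> A \<Longrightarrow> a \<ge> 0"
    and B0: "0 \<in> B"
    and AB: "\<And>a b. a > 0 \<Longrightarrow> b > 0 \<Longrightarrow> a \<in> A \<Longrightarrow> a * b < 1 \<Longrightarrow> b \<in> B"
    and BA: "\<And>a b. a > 0 \<Longrightarrow> b > 0 \<Longrightarrow> b \<in> B \<Longrightarrow> a * b > 1 \<Longrightarrow> a \<in> A"
  shows "Sup (ereal ` B) = inverse (Inf (ereal ` A))"
proof (cases "A = {}")
  case True
  have "\<forall>b\<in>B. b \<le> 0"
  proof (rule ccontr)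
    assume "\<not> (\<forall>b\<in>B. b \<le> 0)"
    then obtain b where b: "b \<in> B" "b > 0" by auto
    have "2 / b \<in> A" using BA[of "2/b" b] b by auto
    then show False using True by auto
  qed
  then have "Sup (ereal ` B) = 0"
    using B0 by (intro antisym) (auto intro!: Sup_upper2[of 0] SUP_least)
  then show ?thesis using True by (simp add: top_ereal_def)
next
  case False
  then obtain a0 where a0: "a0 \<in> A" by auto
  have I0: "Inf (ereal ` A) \<ge> 0" using Anonneg by (auto intro!: INF_greatest)
  have Ifin: "Inf (ereal ` A) \<le> ereal a0" using a0 by (auto intro: INF_lower)
  then obtain \<alpha> where al: "Inf (ereal ` A) = ereal \<alpha>" using I0
    by (cases "Inf (ereal ` A)") auto
  have a_ge: "a \<ge> \<alpha>" if "a \<in> A" for a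
    using that INF_lower[of a A ereal] al by auto
  have a_ex: "\<exists>a\<in>A. a < r" if "r > \<alpha>" for r
  proof -
    have "Inf (ereal ` A) < ereal r" using al that by simp
    then obtain a where "a \<in> A" "ereal a < ereal r" by (auto simp: INF_less_iff)
    then show ?thesis by auto
  qed
  have al0: "\<alpha> \<ge> 0" using I0 al by simp
  show ?thesis
  proof (cases "\<alpha> = 0")
    case True
    have "Sup (ereal ` B) = \<infinity>"
    proof (rule ereal_top)
      fix r :: real
      show "Sup (ereal ` B) \<ge> ereal r"
      proof (cases "r > 0")
        case True
        obtain a where a: "a \<in> A" "a < 1 / r" using a_ex[of "1/r"] True \<open>\<alpha> = 0\<close> by auto
        define a' where "a' = max a (1 / (2 * r))"
        have "a' \<in> A" using Aup[OF a(1)] a'_def by auto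
        moreover have "a' > 0" unfolding a'_def using True
          by (simp add: less_max_iff_disj)
        moreover have "a' * r < 1" using a True unfolding a'_def
          by (auto simp: field_simps max_def)
        ultimately have "r \<in> B" using AB[of a' r] True by auto
        then show ?thesis by (auto intro: Sup_upper)
      next
        case False
        then show ?thesis using B0 by (auto intro!: Sup_upper2[of 0])
      qed
    qed
    then show ?thesis using al True by simp
  next
    case False
    then have alp: "\<alpha> > 0" using al0 by simp
    have "Sup (ereal ` B) \<le> ereal (1 / \<alpha>)"
    proof (rule SUP_least)
      fix b assume b: "b \<in> B"
      show "ereal b \<le> ereal (1 / \<alpha>)"
      proof (cases "b > 0")
        case True
        have "\<alpha> \<le> 1 / b"
        proof (rule dense_ge)
          fix y assume "1 / b < y"
          moreover have "0 < 1 / b" using True by simp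
          ultimately have "y > 0" by linarith
          then have "y \<in> A" using BA[of y b] b True \<open>1 / b < y\<close> by (auto simp: field_simps)
          then show "\<alpha> \<le> y" by (rule a_ge)
        qed
        then show ?thesis using True alp by (simp add: field_simps)
      next
        case False
        moreover have "0 < 1 / \<alpha>" using alp by simp
        ultimately have "b \<le> 1 / \<alpha>" by linarith
        then show ?thesis by simp
      qed
    qed
    moreover have "ereal (1 / \<alpha>) \<le> Sup (ereal ` B)"
    proof (rule dense_le)
      fix y assume y: "y < ereal (1 / \<alpha>)"
      show "y \<le> Sup (ereal ` B)"
      proof (cases "y \<le> 0")
        case True
        then show ?thesis using B0 by (auto intro!: Sup_upper2[of "ereal 0"] simp: zero_ereal_def[symmetric])
      next
        case False
        then obtain r where r: "y = ereal r" "r > 0" "r < 1 / \<alpha>" using y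
          by (cases y) auto
        then have "1 / r > \<alpha>" using alp by (simp add: field_simps)
        then obtain a where a: "a \<in> A" "a < 1 / r" using a_ex by blast
        have "a > 0" using a_ge[OF a(1)] alp by simp
        moreover have "a * r < 1" using a r by (simp add: field_simps)
        ultimately have "r \<in> B" using AB[of a r] a r by auto
        then show ?thesis using r by (auto intro: Sup_upper)
      qed
    qed
    ultimately show ?thesis using al alp by (simp add: field_simps)
  qed
qed


definition UB :: "(real \<Rightarrow> real) \<Rightarrow> real \<Rightarrow> bool" where
  "UB h a \<longleftrightarrow> (\<exists>C>0. \<forall>\<Lambda>>1. eventually (\<lambda>x. \<forall>l\<in>{1..\<Lambda>}. h (l * x) \<le> C * l powr a * h x) at_top)"
definition LB :: "(real \<Rightarrow> real) \<Rightarrow> real \<Rightarrow> bool" where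
  "LB h b \<longleftrightarrow> (\<exists>D>0. \<forall>\<Lambda>>1. eventually (\<lambda>x. \<forall>l\<in>{1..\<Lambda>}. h (l * x) \<ge> D * l powr b * h x) at_top)"
definition GUB :: "(real \<Rightarrow> real) \<Rightarrow> real \<Rightarrow> bool" where
  "GUB h a \<longleftrightarrow> (\<exists>C>0. \<exists>x0. \<forall>x\<ge>x0. \<forall>l\<ge>1. h (l * x) \<le> C * l powr a * h x)"
definition GLB :: "(real \<Rightarrow> real) \<Rightarrow> real \<Rightarrow> bool" where
  "GLB h b \<longleftrightarrow> (\<exists>D>0. \<exists>x0. \<forall>x\<ge>x0. \<forall>l\<ge>1. h (l * x) \<ge> D * l powr b * h x)"

lemma UB_iff:
  assumes pos: "eventually (\<lambda>x. h x > 0) at_top"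
  shows "(\<exists>C>0. \<forall>\<Lambda>>1. Limsup at_top (\<lambda>x. SUP l\<in>{1..\<Lambda>}. ereal (h (l * x) / (l powr a * h x))) \<le> ereal C)
     \<longleftrightarrow> UB h a"
proof
  assume "\<exists>C>0. \<forall>\<Lambda>>1. Limsup at_top (\<lambda>x. SUP l\<in>{1..\<Lambda>}. ereal (h (l * x) / (l powr a * h x))) \<le> ereal C"
  then obtain C where C: "C > 0" "\<And>\<Lambda>. \<Lambda> > 1 \<Longrightarrow> Limsup at_top (\<lambda>x. SUP l\<in>{1..\<Lambda>}. ereal (h (l * x) / (l powr a * h x))) \<le> ereal C"
    by auto
  show "UB h a" unfolding UB_def
  proof (intro exI[of _ "2 * C"] conjI allI impI)
    show "0 < 2 * C" using C by simp
    fix \<Lambda> :: real assume "\<Lambda> > 1"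
    have "Limsup at_top (\<lambda>x. SUP l\<in>{1..\<Lambda>}. ereal (h (l * x) / (l powr a * h x))) < ereal (2 * C)"
      using C(2)[OF \<open>\<Lambda> > 1\<close>] C(1) by (auto intro: le_less_trans)
    from Limsup_lessD[OF this] 
    have ev: "eventually (\<lambda>x. (SUP l\<in>{1..\<Lambda>}. ereal (h (l * x) / (l powr a * h x))) < ereal (2 * C)) at_top" .
    show "eventually (\<lambda>x. \<forall>l\<in>{1..\<Lambda>}. h (l * x) \<le> 2 * C * l powr a * h x) at_top"
      using ev pos
    proof eventually_elim
      case (elim x)
      show ?case
      proof
        fix l :: real assume l: "l \<in> {1..\<Lambda>}"
        have "ereal (h (l * x) / (l powr a * h x)) < ereal (2 * C)"
          using elim(1) l by (meson SUP_lessD)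
        then have "h (l * x) / (l powr a * h x) < 2 * C" by simp
        moreover have "l powr a * h x > 0" using l elim(2) by simp
        ultimately show "h (l * x) \<le> 2 * C * l powr a * h x"
          by (simp add: field_simps)
      qed
    qed
  qed
next
  assume "UB h a"
  then obtain C where C: "C > 0" "\<And>\<Lambda>. \<Lambda> > 1 \<Longrightarrow> eventually (\<lambda>x. \<forall>l\<in>{1..\<Lambda>}. h (l * x) \<le> C * l powr a * h x) at_top"
    unfolding UB_def by auto
  show "\<exists>C>0. \<forall>\<Lambda>>1. Limsup at_top (\<lambda>x. SUP l\<in>{1..\<Lambda>}. ereal (h (l * x) / (l powr a * h x))) \<le> ereal C"
  proof (intro exI[of _ C] conjI allI impI)
    show "C > 0" by fact
    fix \<Lambda> :: real assume "\<Lambda> > 1"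
    show "Limsup at_top (\<lambda>x. SUP l\<in>{1..\<Lambda>}. ereal (h (l * x) / (l powr a * h x))) \<le> ereal C"
    proof (rule Limsup_bounded)
      show "eventually (\<lambda>x. (SUP l\<in>{1..\<Lambda>}. ereal (h (l * x) / (l powr a * h x))) \<le> ereal C) at_top"
        using C(2)[OF \<open>\<Lambda> > 1\<close>] pos
      proof eventually_elim
        case (elim x)
        show ?case
        proof (rule SUP_least)
          fix l :: real assume l: "l \<in> {1..\<Lambda>}"
          have "l powr a * h x > 0" using l elim(2) by simp
          then show "ereal (h (l * x) / (l powr a * h x)) \<le> ereal C"
            using elim(1) l by (simp add: field_simps)
        qed
      qed
    qed
  qed
qed

lemma LB_iff:
  assumes pos: "eventually (\<lambda>x. h x > 0) at_top"
  shows "(\<exists>D>0. \<forall>\<Lambda>>1. Liminf at_top (\<lambda>x. INF l\<in>{1..\<Lambda>}. ereal (h (l * x) / (l powr b * h x))) \<ge> ereal D)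
     \<longleftrightarrow> LB h b"
proof
  assume "\<exists>D>0. \<forall>\<Lambda>>1. Liminf at_top (\<lambda>x. INF l\<in>{1..\<Lambda>}. ereal (h (l * x) / (l powr b * h x))) \<ge> ereal D"
  then obtain D where D: "D > 0" "\<And>\<Lambda>. \<Lambda> > 1 \<Longrightarrow> Liminf at_top (\<lambda>x. INF l\<in>{1..\<Lambda>}. ereal (h (l * x) / (l powr b * h x))) \<ge> ereal D"
    by auto
  show "LB h b" unfolding LB_def
  proof (intro exI[of _ "D / 2"] conjI allI impI)
    show "0 < D / 2" using D by simp
    fix \<Lambda> :: real assume "\<Lambda> > 1"
    have "Liminf at_top (\<lambda>x. INF l\<in>{1..\<Lambda>}. ereal (h (l * x) / (l powr b * h x))) > ereal (D / 2)"
    proof -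
      have "ereal (D / 2) < ereal D" using D(1) by simp
      then show ?thesis using D(2)[OF \<open>\<Lambda> > 1\<close>] by (rule less_le_trans)
    qed
    from less_LiminfD[OF this] 
    have ev: "eventually (\<lambda>x. (INF l\<in>{1..\<Lambda>}. ereal (h (l * x) / (l powr b * h x))) > ereal (D / 2)) at_top" .
    show "eventually (\<lambda>x. \<forall>l\<in>{1..\<Lambda>}. h (l * x) \<ge> D / 2 * l powr b * h x) at_top"
      using ev pos
    proof eventually_elim
      case (elim x)
      show ?case
      proof
        fix l :: real assume l: "l \<in> {1..\<Lambda>}"
        have "ereal (h (l * x) / (l powr b * h x)) > ereal (D / 2)"
          using elim(1) l by (meson less_INF_D)
        then have "h (l * x) / (l powr b * h x) > D / 2" by simp
        moreover have "l powr b * h x > 0" using l elim(2) by simp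
        ultimately show "h (l * x) \<ge> D / 2 * l powr b * h x"
          by (simp add: field_simps)
      qed
    qed
  qed
next
  assume "LB h b"
  then obtain D where D: "D > 0" "\<And>\<Lambda>. \<Lambda> > 1 \<Longrightarrow> eventually (\<lambda>x. \<forall>l\<in>{1..\<Lambda>}. h (l * x) \<ge> D * l powr b * h x) at_top"
    unfolding LB_def by auto
  show "\<exists>D>0. \<forall>\<Lambda>>1. Liminf at_top (\<lambda>x. INF l\<in>{1..\<Lambda>}. ereal (h (l * x) / (l powr b * h x))) \<ge> ereal D"
  proof (intro exI[of _ D] conjI allI impI)
    show "D > 0" by fact
    fix \<Lambda> :: real assume "\<Lambda> > 1"
    show "Liminf at_top (\<lambda>x. INF l\<in>{1..\<Lambda>}. ereal (h (l * x) / (l powr b * h x))) \<ge> ereal D"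
    proof (rule Liminf_bounded)
      show "eventually (\<lambda>x. (INF l\<in>{1..\<Lambda>}. ereal (h (l * x) / (l powr b * h x))) \<ge> ereal D) at_top"
        using D(2)[OF \<open>\<Lambda> > 1\<close>] pos
      proof eventually_elim
        case (elim x)
        show ?case
        proof (rule INF_greatest)
          fix l :: real assume l: "l \<in> {1..\<Lambda>}"
          have "l powr b * h x > 0" using l elim(2) by simp
          then show "ereal (h (l * x) / (l powr b * h x)) \<ge> ereal D"
            using elim(1) l by (simp add: field_simps)
        qed
      qed
    qed
  qed
qed


lemma loc_glob:
  fixes h :: "real \<Rightarrow> real" and x0 :: real
  assumes pos: "\<And>x. x \<ge> x0 \<Longrightarrow> h x > 0" and x0: "x0 \<ge> 0" and L: "\<Lambda> > 1"
    and CL: "C \<le> \<Lambda> powr e" and e: "e \<ge> 0"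
    and H: "\<And>x l. x \<ge> x0 \<Longrightarrow> l \<in> {1..\<Lambda>} \<Longrightarrow> h (l * x) \<le> C * l powr a * h x"
  shows "\<forall>x\<ge>x0. \<forall>l\<ge>1. h (l * x) \<le> \<Lambda> powr e * l powr (a + e) * h x"
proof -
  have main: "\<forall>x\<ge>x0. \<forall>l. 1 \<le> l \<and> l \<le> \<Lambda> ^ k \<longrightarrow> h (l * x) \<le> \<Lambda> powr e * l powr (a + e) * h x" for k
  proof (induction k)
    case 0
    show ?case
    proof (intro allI impI)
      fix x l :: real assume x: "x \<ge> x0" and l: "1 \<le> l \<and> l \<le> \<Lambda> ^ 0"
      then have "l = 1" by simp
      moreover have "\<Lambda> powr e \<ge> 1" using L e by (simp add: ge_one_powr_ge_zero)
      moreover have "h x > 0" using pos x by simp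
      ultimately show "h (l * x) \<le> \<Lambda> powr e * l powr (a + e) * h x" by simp
    qed
  next
    case (Suc k)
    show ?case
    proof (intro allI impI)
      fix x l :: real assume x: "x \<ge> x0" and l: "1 \<le> l \<and> l \<le> \<Lambda> ^ Suc k"
      have hx: "h x > 0" using pos x by simp
      show "h (l * x) \<le> \<Lambda> powr e * l powr (a + e) * h x"
      proof (cases "l \<le> \<Lambda>")
        case True
        have "h (l * x) \<le> C * l powr a * h x" using H[OF x] l True by auto
        also have "\<dots> \<le> \<Lambda> powr e * l powr a * h x"
          using CL hx by (intro mult_right_mono) auto
        also have "\<dots> \<le> \<Lambda> powr e * (l powr a * l powr e) * h x"
        proof -
          have "l powr e \<ge> 1" using l e by (simp add: ge_one_powr_ge_zero)
          then have "l powr a \<le> l powr a * l powr e" using l by simp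
          then show ?thesis using hx by (intro mult_right_mono mult_left_mono) auto
        qed
        also have "\<dots> = \<Lambda> powr e * l powr (a + e) * h x" by (simp add: powr_add)
        finally show ?thesis .
      next
        case False
        define l' where "l' = l / \<Lambda>"
        have l'1: "1 \<le> l'" using False L unfolding l'_def by (simp add: field_simps)
        have l'2: "l' \<le> \<Lambda> ^ k" using l L unfolding l'_def by (simp add: field_simps)
        have x': "\<Lambda> * x \<ge> x0"
        proof -
          have "x \<le> \<Lambda> * x" using L x x0 by (simp add: mult_le_cancel_right1)
          then show ?thesis using x by linarith
        qed
        have ll: "l * x = l' * (\<Lambda> * x)" unfolding l'_def using L by simp
        have "h (l * x) \<le> \<Lambda> powr e * l' powr (a + e) * h (\<Lambda> * x)"
          using Suc.IH x' l'1 l'2 unfolding ll by blast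
        also have "\<dots> \<le> \<Lambda> powr e * l' powr (a + e) * (C * \<Lambda> powr a * h x)"
          using H[OF x, of \<Lambda>] L by (intro mult_left_mono) auto
        also have "\<dots> \<le> \<Lambda> powr e * l' powr (a + e) * (\<Lambda> powr e * \<Lambda> powr a * h x)"
          using CL hx by (intro mult_left_mono mult_right_mono) auto
        also have "\<dots> = \<Lambda> powr e * (l' * \<Lambda>) powr (a + e) * h x"
          using L l'1 by (simp add: powr_mult powr_add)
        also have "l' * \<Lambda> = l" unfolding l'_def using L by simp
        finally show ?thesis .
      qed
    qed
  qed
  show ?thesis
  proof (intro allI impI)
    fix x l :: real assume x: "x \<ge> x0" and l: "l \<ge> 1"
    obtain k where "l < \<Lambda> ^ k" using real_arch_pow[OF L] by blast
    then show "h (l * x) \<le> \<Lambda> powr e * l powr (a + e) * h x" using main[of k] x l by auto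
  qed
qed

lemma UB_GUB:
  assumes "UB h a" "a < a'" and pos: "eventually (\<lambda>x. h x > 0) at_top"
  shows "GUB h a'"
proof -
  obtain C where C: "C > 0" "\<And>\<Lambda>. \<Lambda> > 1 \<Longrightarrow> eventually (\<lambda>x. \<forall>l\<in>{1..\<Lambda>}. h (l * x) \<le> C * l powr a * h x) at_top"
    using assms(1) unfolding UB_def by auto
  define e where "e = a' - a"
  have e: "e > 0" using assms(2) e_def by simp
  define \<Lambda> where "\<Lambda> = max 2 (C powr (1 / e))"
  have L: "\<Lambda> > 1" unfolding \<Lambda>_def by simp
  have CL: "C \<le> \<Lambda> powr e"
  proof -
    have "C = (C powr (1 / e)) powr e" using C(1) e by (simp add: powr_powr)
    also have "\<dots> \<le> \<Lambda> powr e" unfolding \<Lambda>_def using e by (intro powr_mono2) auto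
    finally show ?thesis .
  qed
  obtain x1 where x1: "\<And>x. x \<ge> x1 \<Longrightarrow> \<forall>l\<in>{1..\<Lambda>}. h (l * x) \<le> C * l powr a * h x"
    using C(2)[OF L] unfolding eventually_at_top_linorder by blast
  obtain x2 where x2: "\<And>x. x \<ge> x2 \<Longrightarrow> h x > 0"
    using pos unfolding eventually_at_top_linorder by blast
  define x0 where "x0 = max 0 (max x1 x2)"
  have "\<forall>x\<ge>x0. \<forall>l\<ge>1. h (l * x) \<le> \<Lambda> powr e * l powr (a + e) * h x"
    by (rule loc_glob[where C = C]) (use x1 x2 L CL e in \<open>auto simp: x0_def\<close>)
  then show ?thesis unfolding GUB_def e_def
    by (intro exI[of _ "\<Lambda> powr e"] conjI exI[of _ x0]) (use L in \<open>auto simp: e_def\<close>)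
qed

lemma LB_GLB:
  assumes "LB h b" "b' < b" and pos: "eventually (\<lambda>x. h x > 0) at_top"
  shows "GLB h b'"
proof -
  obtain D where D: "D > 0" "\<And>\<Lambda>. \<Lambda> > 1 \<Longrightarrow> eventually (\<lambda>x. \<forall>l\<in>{1..\<Lambda>}. h (l * x) \<ge> D * l powr b * h x) at_top"
    using assms(1) unfolding LB_def by auto
  have "UB (\<lambda>x. 1 / h x) (- b)" unfolding UB_def
  proof (intro exI[of _ "1 / D"] conjI allI impI)
    show "0 < 1 / D" using D by simp
    fix \<Lambda> :: real assume L: "\<Lambda> > 1"
    show "eventually (\<lambda>x. \<forall>l\<in>{1..\<Lambda>}. 1 / h (l * x) \<le> 1 / D * l powr - b * (1 / h x)) at_top"
      using D(2)[OF L] pos eventually_ge_at_top[of 0]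
    proof eventually_elim
      case (elim x)
      show ?case
      proof
        fix l assume l: "l \<in> {1..\<Lambda>}"
        have p: "D * l powr b * h x > 0" using D elim l by auto
        have "h (l * x) > 0" using p elim(1) l by fastforce
        have "1 / h (l * x) \<le> 1 / (D * l powr b * h x)"
          using elim(1) l p \<open>h (l * x) > 0\<close> by (intro divide_left_mono) auto
        also have "\<dots> = 1 / D * l powr - b * (1 / h x)"
          using l by (simp add: powr_minus field_simps)
        finally show "1 / h (l * x) \<le> 1 / D * l powr - b * (1 / h x)" .
      qed
    qed
  qed
  then have "GUB (\<lambda>x. 1 / h x) (- b')"
    by (rule UB_GUB) (use assms pos in auto)
  then obtain C x0 where C: "C > 0" "\<And>x l. x \<ge> x0 \<Longrightarrow> l \<ge> 1 \<Longrightarrow> 1 / h (l * x) \<le> C * l powr - b' * (1 / h x)"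
    unfolding GUB_def by blast
  obtain x2 where x2: "\<And>x. x \<ge> x2 \<Longrightarrow> h x > 0"
    using pos unfolding eventually_at_top_linorder by blast
  have "\<forall>x\<ge>max 0 (max x0 x2). \<forall>l\<ge>1. 1 / C * l powr b' * h x \<le> h (l * x)"
  proof (intro allI impI)
    fix x l :: real assume x: "max 0 (max x0 x2) \<le> x" and l: "1 \<le> l"
    have hx: "h x > 0" using x2 x by simp
    have lx: "l * x \<ge> x" using l x by (simp add: mult_le_cancel_right1)
    have hlx: "h (l * x) > 0" using x2 x lx by simp
    have "1 / h (l * x) \<le> C * l powr - b' * (1 / h x)" using C x l by simp
    then have "1 / h (l * x) \<le> C / (l powr b' * h x)" using l by (simp add: powr_minus field_simps)
    then show "1 / C * l powr b' * h x \<le> h (l * x)"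
      using hx hlx C l by (simp add: field_simps)
  qed
  moreover have "1 / C > 0" using C(1) by simp
  ultimately show ?thesis unfolding GLB_def by blast
qed


lemma UB_mono:
  assumes "UB h a" "a \<le> a'" and pos: "eventually (\<lambda>x. h x > 0) at_top"
  shows "UB h a'"
proof -
  obtain C where C: "C > 0" "\<And>\<Lambda>. \<Lambda> > 1 \<Longrightarrow> eventually (\<lambda>x. \<forall>l\<in>{1..\<Lambda>}. h (l * x) \<le> C * l powr a * h x) at_top"
    using assms(1) unfolding UB_def by auto
  show ?thesis unfolding UB_def
  proof (intro exI[of _ C] conjI allI impI)
    show "C > 0" by fact
    fix \<Lambda> :: real assume L: "\<Lambda> > 1"
    show "eventually (\<lambda>x. \<forall>l\<in>{1..\<Lambda>}. h (l * x) \<le> C * l powr a' * h x) at_top"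
      using C(2)[OF L] pos
    proof eventually_elim
      case (elim x)
      show ?case
      proof
        fix l assume l: "l \<in> {1..\<Lambda>}"
        have "l powr a \<le> l powr a'" using l assms(2) by (intro powr_mono) auto
        then have "C * l powr a * h x \<le> C * l powr a' * h x"
          using C(1) elim(2) by (intro mult_right_mono mult_left_mono) auto
        then show "h (l * x) \<le> C * l powr a' * h x" using elim(1) l by fastforce
      qed
    qed
  qed
qed

lemma UB_nonneg:
  assumes "UB h a"
    and mon: "eventually (\<lambda>x. h x > 0 \<and> (\<forall>l\<ge>1. h (l * x) \<ge> h x)) at_top"
  shows "a \<ge> 0"
proof (rule ccontr)
  assume "\<not> a \<ge> 0"
  then have a: "a < 0" by simp
  obtain C where C: "C > 0" "\<And>\<Lambda>. \<Lambda> > 1 \<Longrightarrow> eventually (\<lambda>x. \<forall>l\<in>{1..\<Lambda>}. h (l * x) \<le> C * l powr a * h x) at_top"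
    using assms(1) unfolding UB_def by auto
  define \<Lambda> where "\<Lambda> = max 2 ((2 * C) powr (- 1 / a))"
  have L: "\<Lambda> > 1" unfolding \<Lambda>_def by simp
  have "2 * C = ((2 * C) powr (- 1 / a)) powr (- a)" using C(1) a by (simp add: powr_powr)
  also have "\<dots> \<le> \<Lambda> powr (- a)" unfolding \<Lambda>_def using a by (intro powr_mono2) auto
  finally have "2 * C \<le> \<Lambda> powr (- a)" .
  then have LC: "C * \<Lambda> powr a \<le> 1 / 2" using L C(1) by (simp add: powr_minus field_simps)
  have "eventually (\<lambda>x. (\<forall>l\<in>{1..\<Lambda>}. h (l * x) \<le> C * l powr a * h x) \<and> (h x > 0 \<and> (\<forall>l\<ge>1. h (l * x) \<ge> h x))) at_top"
    using C(2)[OF L] mon by (rule eventually_conj)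
  then obtain x where elim: "\<forall>l\<in>{1..\<Lambda>}. h (l * x) \<le> C * l powr a * h x" "h x > 0 \<and> (\<forall>l\<ge>1. h (l * x) \<ge> h x)"
    unfolding eventually_at_top_linorder by blast
  have "h (\<Lambda> * x) \<le> C * \<Lambda> powr a * h x" using elim(1) L by auto
  also have "\<dots> \<le> 1 / 2 * h x" using LC elim(2) by (intro mult_right_mono) auto
  also have "\<dots> < h x" using elim(2) by simp
  also have "\<dots> \<le> h (\<Lambda> * x)" using elim(2) L by auto
  finally show False by simp
qed

lemma LB_zero:
  assumes mon: "eventually (\<lambda>x. h x > 0 \<and> (\<forall>l\<ge>1. h (l * x) \<ge> h x)) at_top"
  shows "LB h 0"
  unfolding LB_def
proof (intro exI[of _ 1] conjI allI impI)
  fix \<Lambda> :: real assume L: "\<Lambda> > 1"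
  show "eventually (\<lambda>x. \<forall>l\<in>{1..\<Lambda>}. h (l * x) \<ge> 1 * l powr 0 * h x) at_top"
    using mon by eventually_elim auto
qed simp

locale qs =
  fixes m :: "nat \<Rightarrow> real"
  assumes mpos: "\<And>j. m j > 0" and mmono: "mono m" and munb: "\<And>t. \<exists>j. t < m j"
begin

definition gn :: "real \<Rightarrow> nat" where "gn t = card {j. m j \<le> t}"

lemma nu_gn: "nu m t = real (gn t)"
  unfolding nu_def gn_def by simp

lemma key: "m j \<le> t \<longleftrightarrow> j < gn t"
proof -
  obtain J where J: "t < m J" using munb by blast
  define k where "k = (LEAST j. t < m j)"
  have k1: "t < m k" unfolding k_def using J by (rule LeastI)
  have S: "{j. m j \<le> t} = {..<k}"
  proof (intro set_eqI iffI)
    fix j assume "j \<in> {j. m j \<le> t}"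
    then have "m j \<le> t" by simp
    show "j \<in> {..<k}"
    proof (rule ccontr)
      assume "j \<notin> {..<k}"
      then have "k \<le> j" by simp
      then have "m k \<le> m j" using mmono by (simp add: mono_def)
      then show False using k1 \<open>m j \<le> t\<close> by simp
    qed
  next
    fix j assume "j \<in> {..<k}"
    then have "\<not> t < m j" unfolding k_def using not_less_Least by auto
    then show "j \<in> {j. m j \<le> t}" by simp
  qed
  show ?thesis unfolding gn_def S by (metis S card_lessThan lessThan_iff mem_Collect_eq)
qed

lemma gn_mono: "s \<le> t \<Longrightarrow> gn s \<le> gn t"
  by (metis key le_less_trans less_imp_le_nat not_le order_trans)

lemma gn_pos: "m 0 \<le> t \<Longrightarrow> gn t \<ge> 1"
  using key[of 0 t] by simp

lemma gn_le: "\<tau> < m k \<Longrightarrow> gn \<tau> \<le> k"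
  using key[of k \<tau>] by simp

lemma gn_ge: "m k \<le> s \<Longrightarrow> gn s \<ge> Suc k"
  using key[of k s] by simp

lemma gn_ev: "eventually (\<lambda>t. real (gn t) \<ge> K) at_top"
proof -
  define n where "n = nat \<lceil>K\<rceil>"
  have "eventually (\<lambda>t. t \<ge> m n) at_top" by (rule eventually_ge_at_top)
  then show ?thesis
  proof eventually_elim
    case (elim t)
    have "gn t \<ge> Suc n" using gn_ge[OF elim] .
    then have "real (gn t) \<ge> real n" by simp
    moreover have "real n \<ge> K" unfolding n_def by linarith
    ultimately show ?case by linarith
  qed
qed

lemma f_eq: "step_fun m x = m (nat \<lfloor>x\<rfloor> - 1)"
  unfolding step_fun_def by (rule arg_cong[where f = m]) linarith

lemma f_nat: "step_fun m (real n) = m (n - 1)"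
  unfolding f_eq by simp

lemma f_mono: "x \<le> y \<Longrightarrow> step_fun m x \<le> step_fun m y"
  unfolding f_eq using mmono by (intro monoD[OF mmono]) (simp add: floor_mono nat_mono diff_le_mono)

lemma f_pos: "step_fun m x > 0"
  unfolding f_eq using mpos by simp

lemma f_ev: "eventually (\<lambda>x. step_fun m x \<ge> T) at_top"
proof -
  obtain j where j: "T < m j" using munb by blast
  have "eventually (\<lambda>x. x \<ge> real j + 1) at_top" by (rule eventually_ge_at_top)
  then show ?thesis
  proof eventually_elim
    case (elim x)
    have "step_fun m (real (j + 1)) \<le> step_fun m x" using elim by (intro f_mono) simp
    then have "m j \<le> step_fun m x" using f_nat[of "j+1"] by simp
    then show ?case using j by simp
  qed
qed

lemma f_mon: "eventually (\<lambda>x. step_fun m x > 0 \<and> (\<forall>l\<ge>1. step_fun m (l * x) \<ge> step_fun m x)) at_top"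
  using eventually_ge_at_top[of 0]
proof eventually_elim
  case (elim x)
  have "\<forall>l\<ge>1. step_fun m (l * x) \<ge> step_fun m x"
  proof (intro allI impI)
    fix l :: real assume "l \<ge> 1"
    then have "x \<le> l * x" using elim by (simp add: mult_le_cancel_right1)
    then show "step_fun m (l * x) \<ge> step_fun m x" by (rule f_mono)
  qed
  then show ?case using f_pos by simp
qed

lemma g_mon: "eventually (\<lambda>t. nu m t > 0 \<and> (\<forall>l\<ge>1. nu m (l * t) \<ge> nu m t)) at_top"
  using eventually_ge_at_top[of "m 0"]
proof eventually_elim
  case (elim t)
  have t0: "t \<ge> 0" using elim mpos[of 0] by simp
  have "\<forall>l\<ge>1. nu m (l * t) \<ge> nu m t"
  proof (intro allI impI)
    fix l :: real assume "l \<ge> 1"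
    then have "t \<le> l * t" using t0 by (simp add: mult_le_cancel_right1)
    then show "nu m (l * t) \<ge> nu m t" unfolding nu_gn by (simp add: gn_mono)
  qed
  then show ?case using gn_pos[OF elim] unfolding nu_gn by simp
qed

end

context qs begin

lemma L1:
  assumes "GLB (step_fun m) b" "b > 0"
  shows "UB (nu m) (1 / b)"
proof -
  obtain D x0 where D: "D > 0" "\<And>x l. x \<ge> x0 \<Longrightarrow> l \<ge> 1 \<Longrightarrow> step_fun m (l * x) \<ge> D * l powr b * step_fun m x"
    using assms(1) unfolding GLB_def by blast
  define C where "C = 2 * max 1 (D powr (- 1 / b))"
  have C2: "C \<ge> 2" unfolding C_def by simp
  have CD: "C \<ge> 2 * D powr (- 1 / b)" unfolding C_def by simp
  show ?thesis unfolding UB_def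
  proof (intro exI[of _ C] conjI allI impI)
    show "C > 0" using C2 by simp
    fix \<Lambda> :: real assume L: "\<Lambda> > 1"
    show "eventually (\<lambda>t. \<forall>l\<in>{1..\<Lambda>}. nu m (l * t) \<le> C * l powr (1 / b) * nu m t) at_top"
      using gn_ev[of "max 1 x0"]
    proof eventually_elim
      case (elim t)
      show ?case
      proof
        fix l assume l: "l \<in> {1..\<Lambda>}"
        define n where "n = gn t"
        define N where "N = gn (l * t)"
        have n1: "real n \<ge> 1" and nx0: "real n \<ge> x0" using elim unfolding n_def by auto
        have lb1: "l powr (1 / b) \<ge> 1" using l assms(2) by (simp add: ge_one_powr_ge_zero)
        show "nu m (l * t) \<le> C * l powr (1 / b) * nu m t"
          unfolding nu_gn N_def[symmetric] n_def[symmetric]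
        proof (cases "N \<le> n + 1")
          case True
          have "real N \<le> 2 * real n" using True n1 by linarith
          also have "\<dots> \<le> C * real n" using C2 n1 by (intro mult_right_mono) auto
          also have "\<dots> \<le> C * l powr (1 / b) * real n"
          proof -
            have "C * real n * 1 \<le> C * real n * l powr (1 / b)"
              using lb1 C2 n1 by (intro mult_left_mono) auto
            then show ?thesis by (simp add: ac_simps)
          qed
          finally show "real N \<le> C * l powr (1 / b) * real n" .
        next
          case False
          define \<mu> where "\<mu> = real N / real (n + 1)"
          have mu1: "\<mu> \<ge> 1" unfolding \<mu>_def using False by simp
          have muN: "\<mu> * real (n + 1) = real N" unfolding \<mu>_def by simp
          have "D * \<mu> powr b * step_fun m (real (n + 1)) \<le> step_fun m (\<mu> * real (n + 1))"
            using D(2)[of "real (n + 1)" \<mu>] nx0 mu1 by simp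
          then have A: "D * \<mu> powr b * m n \<le> m (N - 1)" unfolding muN f_nat by simp
          have "m (N - 1) \<le> l * t" using key[of "N - 1" "l * t"] False unfolding N_def by simp
          moreover have "t < m n" using key[of n t] unfolding n_def by simp
          moreover have "l * t < l * m n" using l \<open>t < m n\<close> by simp
          ultimately have "D * \<mu> powr b * m n < l * m n"
            using A by linarith
          then have B: "D * \<mu> powr b < l" using mpos[of n] by simp
          have "\<mu> = (\<mu> powr b) powr (1 / b)" using mu1 assms(2) by (simp add: powr_powr)
          also have "\<dots> < (l / D) powr (1 / b)"
            using B D(1) assms(2) mu1 by (intro powr_less_mono2) (auto simp: field_simps)
          also have "\<dots> = l powr (1 / b) * D powr (- 1 / b)"
          proof -
            have "(l / D) powr (1 / b) = l powr (1 / b) / D powr (1 / b)"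
              using D(1) l powr_divide[of l D "1 / b"] by linarith
            moreover have "D powr (- 1 / b) = inverse (D powr (1 / b))"
              using powr_minus[of D "1 / b"] by simp
            ultimately show ?thesis by (simp add: divide_inverse)
          qed
          finally have mu: "\<mu> < l powr (1 / b) * D powr (- 1 / b)" .
          have "real N = \<mu> * real (n + 1)" using muN by simp
          also have "\<dots> \<le> \<mu> * (2 * real n)" using mu1 n1 by (intro mult_left_mono) auto
          also have "\<dots> \<le> (l powr (1 / b) * D powr (- 1 / b)) * (2 * real n)"
            using mu n1 by (intro mult_right_mono) auto
          also have "\<dots> = (2 * D powr (- 1 / b)) * l powr (1 / b) * real n" by simp
          also have "\<dots> \<le> C * l powr (1 / b) * real n"
            using CD n1 lb1 by (intro mult_right_mono) auto
          finally show "real N \<le> C * l powr (1 / b) * real n" .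
        qed
      qed
    qed
  qed
qed

end

lemma powr_div_split:
  fixes l D c :: real
  assumes "l > 0" "D > 0"
  shows "(l / D) powr c = l powr c * D powr (- c)"
proof -
  have "(l / D) powr c = l powr c / D powr c"
    using assms powr_divide[of l D c] by linarith
  moreover have "D powr (- c) = inverse (D powr c)"
    using powr_minus[of D c] by simp
  ultimately show ?thesis by (simp add: divide_inverse)
qed

context qs begin

lemma L2:
  assumes "GUB (nu m) a" "a > 0" "b \<le> 1 / a"
  shows "LB (step_fun m) b"
proof -
  obtain C t0 where C: "C > 0" "\<And>t l. t \<ge> t0 \<Longrightarrow> l \<ge> 1 \<Longrightarrow> nu m (l * t) \<le> C * l powr a * nu m t"
    using assms(1) unfolding GUB_def by blast
  define D where "D = 1 / 2 * (2 * C) powr (- 1 / a)"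
  show ?thesis unfolding LB_def
  proof (intro exI[of _ D] conjI allI impI)
    show "D > 0" unfolding D_def using C by simp
    fix \<Lambda> :: real assume L: "\<Lambda> > 1"
    show "eventually (\<lambda>x. \<forall>l\<in>{1..\<Lambda>}. step_fun m (l * x) \<ge> D * l powr b * step_fun m x) at_top"
      using eventually_ge_at_top[of 2] f_ev[of "2 * t0"]
    proof eventually_elim
      case (elim x)
      show ?case
      proof
        fix l assume l: "l \<in> {1..\<Lambda>}"
        define n where "n = nat \<lfloor>x\<rfloor>"
        define N where "N = nat \<lfloor>l * x\<rfloor>"
        define t where "t = step_fun m x"
        define s where "s = step_fun m (l * x)"
        have t: "t = m (n - 1)" unfolding t_def n_def f_eq ..
        have s: "s = m (N - 1)" unfolding s_def N_def f_eq ..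
        have tpos: "t > 0" unfolding t_def by (rule f_pos)
        have lx: "l * x \<ge> x" using l elim by (simp add: mult_le_cancel_right1)
        have st: "s \<ge> t" unfolding s_def t_def using lx by (rule f_mono)
        define \<tau> where "\<tau> = t / 2"
        have tau0: "\<tau> \<ge> t0" using elim unfolding \<tau>_def t_def by simp
        have "gn \<tau> \<le> n - 1" using t tpos unfolding \<tau>_def by (intro gn_le) simp
        then have gtau: "real (gn \<tau>) \<le> x" unfolding n_def using elim by linarith
        define \<mu> where "\<mu> = s / \<tau>"
        have mu1: "\<mu> \<ge> 1" unfolding \<mu>_def \<tau>_def using st tpos by (simp add: field_simps)
        have mus: "\<mu> * \<tau> = s" unfolding \<mu>_def \<tau>_def using tpos by simp
        have "gn s \<ge> Suc (N - 1)" using s by (intro gn_ge) simp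
        then have "real (gn s) \<ge> real N - 1 + 1" by linarith
        moreover have "real N \<ge> l * x - 1" unfolding N_def using lx elim by linarith
        ultimately have "l * x / 2 \<le> real (gn s)" using lx elim by linarith
        also have "\<dots> = nu m (\<mu> * \<tau>)" unfolding mus nu_gn ..
        also have "\<dots> \<le> C * \<mu> powr a * nu m \<tau>" using C(2)[OF tau0 mu1] .
        also have "\<dots> \<le> C * \<mu> powr a * x" unfolding nu_gn using gtau C(1)
          by (intro mult_left_mono) auto
        finally have "l * x / 2 \<le> C * \<mu> powr a * x" .
        then have "l / 2 \<le> C * \<mu> powr a" using elim by (simp add: field_simps)
        then have la: "l / (2 * C) \<le> \<mu> powr a" using C(1) by (simp add: field_simps)
        have "(l / (2 * C)) powr (1 / a) \<le> (\<mu> powr a) powr (1 / a)"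
          using la l C(1) assms(2) by (intro powr_mono2) auto
        also have "\<dots> = \<mu>" using mu1 assms(2) by (simp add: powr_powr)
        finally have mu: "l powr (1 / a) * (2 * C) powr (- (1 / a)) \<le> \<mu>"
          using powr_div_split[of l "2 * C" "1 / a"] l C(1) by simp
        have lb: "l powr b \<le> l powr (1 / a)" using l assms(3) by (intro powr_mono) auto
        have "D * l powr b * t \<le> D * l powr (1 / a) * t"
          using lb tpos C(1) unfolding D_def by (intro mult_right_mono mult_left_mono) auto
        also have "\<dots> = (l powr (1 / a) * (2 * C) powr (- (1 / a))) * \<tau>"
          unfolding D_def \<tau>_def by simp
        also have "\<dots> \<le> \<mu> * \<tau>" using mu tpos unfolding \<tau>_def by (intro mult_right_mono) auto
        also have "\<dots> = s" by (rule mus)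
        finally show "D * l powr b * step_fun m x \<le> step_fun m (l * x)" unfolding s_def t_def .
      qed
    qed
  qed
qed

end

context qs begin

lemma L3:
  assumes "GUB (step_fun m) a" "a > 0" "b \<le> 1 / a"
  shows "LB (nu m) b"
proof -
  obtain C x0 where C: "C > 0" "\<And>x l. x \<ge> x0 \<Longrightarrow> l \<ge> 1 \<Longrightarrow> step_fun m (l * x) \<le> C * l powr a * step_fun m x"
    using assms(1) unfolding GUB_def by blast
  define D where "D = 1 / 2 * C powr (- 1 / a)"
  show ?thesis unfolding LB_def
  proof (intro exI[of _ D] conjI allI impI)
    show "D > 0" unfolding D_def using C by simp
    fix \<Lambda> :: real assume L: "\<Lambda> > 1"
    show "eventually (\<lambda>t. \<forall>l\<in>{1..\<Lambda>}. nu m (l * t) \<ge> D * l powr b * nu m t) at_top"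
      using gn_ev[of "max 1 x0"]
    proof eventually_elim
      case (elim t)
      show ?case
      proof
        fix l assume l: "l \<in> {1..\<Lambda>}"
        define n where "n = gn t"
        define N where "N = gn (l * t)"
        have n1: "real n \<ge> 1" and nx0: "real n \<ge> x0" using elim unfolding n_def by auto
        have "m 0 \<le> t" using key[of 0 t] n1 unfolding n_def by simp
        then have tpos: "t > 0" using mpos[of 0] by simp
        have lt: "l * t \<ge> t" using l tpos by (simp add: mult_le_cancel_right1)
        have Nn: "N \<ge> n" unfolding N_def n_def using lt by (rule gn_mono)
        have fn: "step_fun m (real n) \<le> t" unfolding f_nat using key[of "n - 1" t] n1 unfolding n_def by simp
        have fN: "step_fun m (real (N + 1)) > l * t" unfolding f_nat using key[of N "l * t"] unfolding N_def by simp
        define \<mu> where "\<mu> = real (N + 1) / real n"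
        have mu1: "\<mu> \<ge> 1" unfolding \<mu>_def using Nn n1 by simp
        have mun: "\<mu> * real n = real (N + 1)" unfolding \<mu>_def using n1 by simp
        have "l * t < step_fun m (\<mu> * real n)" unfolding mun by (rule fN)
        also have "\<dots> \<le> C * \<mu> powr a * step_fun m (real n)" using C(2)[OF nx0 mu1] .
        also have "\<dots> \<le> C * \<mu> powr a * t" using fn C(1) by (intro mult_left_mono) auto
        finally have "l * t < C * \<mu> powr a * t" .
        then have "l < C * \<mu> powr a" using tpos by simp
        then have la: "l / C \<le> \<mu> powr a" using C(1) by (simp add: field_simps)
        have "(l / C) powr (1 / a) \<le> (\<mu> powr a) powr (1 / a)"
          using la l C(1) assms(2) by (intro powr_mono2) auto
        also have "\<dots> = \<mu>" using mu1 assms(2) by (simp add: powr_powr)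
        finally have mu: "l powr (1 / a) * C powr (- (1 / a)) \<le> \<mu>"
          using powr_div_split[of l C "1 / a"] l C(1) by simp
        have lb: "l powr b \<le> l powr (1 / a)" using l assms(3) by (intro powr_mono) auto
        have "D * l powr b * real n \<le> D * l powr (1 / a) * real n"
          using lb n1 C(1) unfolding D_def by (intro mult_right_mono mult_left_mono) auto
        also have "\<dots> = (l powr (1 / a) * C powr (- (1 / a))) * real n / 2"
          unfolding D_def by simp
        also have "\<dots> \<le> \<mu> * real n / 2" using mu n1 by (intro divide_right_mono mult_right_mono) auto
        also have "\<dots> = real (N + 1) / 2" using mun by simp
        also have "\<dots> \<le> real N" using Nn n1 by simp
        finally show "D * l powr b * nu m t \<le> nu m (l * t)" unfolding nu_gn n_def N_def .
      qed
    qed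
  qed
qed

lemma L4:
  assumes "GLB (nu m) b" "b > 0" "a \<ge> 1 / b"
  shows "UB (step_fun m) a"
proof -
  obtain D t0 where D: "D > 0" "\<And>t l. t \<ge> t0 \<Longrightarrow> l \<ge> 1 \<Longrightarrow> nu m (l * t) \<ge> D * l powr b * nu m t"
    using assms(1) unfolding GLB_def by blast
  define C where "C = 2 * max 1 ((2 / D) powr (1 / b))"
  have C2: "C \<ge> 2" unfolding C_def by simp
  have CD: "C \<ge> 2 * (2 / D) powr (1 / b)" unfolding C_def by simp
  show ?thesis unfolding UB_def
  proof (intro exI[of _ C] conjI allI impI)
    show "C > 0" using C2 by simp
    fix \<Lambda> :: real assume L: "\<Lambda> > 1"
    show "eventually (\<lambda>x. \<forall>l\<in>{1..\<Lambda>}. step_fun m (l * x) \<le> C * l powr a * step_fun m x) at_top"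
      using eventually_ge_at_top[of 2] f_ev[of t0]
    proof eventually_elim
      case (elim x)
      show ?case
      proof
        fix l assume l: "l \<in> {1..\<Lambda>}"
        define n where "n = nat \<lfloor>x\<rfloor>"
        define N where "N = nat \<lfloor>l * x\<rfloor>"
        define t where "t = step_fun m x"
        define s where "s = step_fun m (l * x)"
        have t: "t = m (n - 1)" unfolding t_def n_def f_eq ..
        have s: "s = m (N - 1)" unfolding s_def N_def f_eq ..
        have tpos: "t > 0" unfolding t_def by (rule f_pos)
        have lx: "l * x \<ge> x" using l elim by (simp add: mult_le_cancel_right1)
        have la1: "l powr a \<ge> 1"
        proof -
          have "1 / b > 0" using assms(2) by simp
          then have "a \<ge> 0" using assms(3) by linarith
          then show ?thesis using l by (simp add: ge_one_powr_ge_zero)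
        qed
        have lab: "l powr (1 / b) \<le> l powr a" using l assms(3) by (intro powr_mono) auto
        have n2: "real n \<ge> 2"
        proof -
          have "2 \<le> \<lfloor>x\<rfloor>" using elim by (simp add: le_floor_iff)
          then show ?thesis unfolding n_def by simp
        qed
        have gt: "gn t \<ge> n" using gn_ge[of "n - 1" t] t n2 by simp
        have "s \<le> C * l powr a * t"
        proof (cases "s \<le> 2 * t")
          case True
          have "2 * t \<le> C * 1 * t" using C2 tpos by simp
          also have "\<dots> \<le> C * l powr a * t" using la1 C2 tpos
            by (intro mult_right_mono mult_left_mono) auto
          finally show ?thesis using True by simp
        next
          case False
          define \<tau> where "\<tau> = s / 2"
          have taut: "\<tau> \<ge> t" using False unfolding \<tau>_def by simp
          have tau0: "\<tau> \<ge> t0" using taut elim unfolding t_def by simp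
          define \<mu> where "\<mu> = \<tau> / t"
          have mu1: "\<mu> \<ge> 1" unfolding \<mu>_def using taut tpos by simp
          have mut: "\<mu> * t = \<tau>" unfolding \<mu>_def using tpos by simp
          have "gn \<tau> \<le> N - 1" using s tpos False unfolding \<tau>_def by (intro gn_le) simp
          then have "real (gn \<tau>) \<le> real N - 1 \<or> N = 0" by linarith
          moreover have "real N \<ge> 1" unfolding N_def using lx elim by linarith
          ultimately have gtau: "real (gn \<tau>) < real N" by linarith
          have "real N \<le> l * x" unfolding N_def using lx elim by linarith
          also have "\<dots> \<le> l * (2 * real n)" unfolding n_def using l elim by (intro mult_left_mono) (linarith, auto)
          finally have NN: "real N \<le> 2 * l * real n" by simp
          have "D * \<mu> powr b * real n \<le> D * \<mu> powr b * nu m t" unfolding nu_gn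
            using gt D(1) by (intro mult_left_mono) auto
          also have "\<dots> \<le> nu m (\<mu> * t)" using D(2)[OF _ mu1] elim unfolding t_def by simp
          also have "\<dots> < real N" unfolding mut nu_gn using gtau .
          also have "\<dots> \<le> 2 * l * real n" using NN .
          finally have "D * \<mu> powr b < 2 * l" using n2 by simp
          then have B: "\<mu> powr b < 2 * l / D" using D(1) by (simp add: field_simps)
          have "\<mu> = (\<mu> powr b) powr (1 / b)" using mu1 assms(2) by (simp add: powr_powr)
          also have "\<dots> < (2 * l / D) powr (1 / b)"
            using B D(1) assms(2) mu1 by (intro powr_less_mono2) auto
          also have "(2 * l / D) powr (1 / b) = (2 / D) powr (1 / b) * l powr (1 / b)"
            using D(1) l by (simp add: powr_mult[symmetric])
          finally have mu: "\<mu> < (2 / D) powr (1 / b) * l powr (1 / b)" .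
          have "s = 2 * \<mu> * t" using mut unfolding \<tau>_def by simp
          also have "\<dots> \<le> 2 * ((2 / D) powr (1 / b) * l powr (1 / b)) * t"
            using mu tpos by (intro mult_right_mono) auto
          also have "\<dots> = (2 * (2 / D) powr (1 / b)) * l powr (1 / b) * t" by simp
          also have "\<dots> \<le> C * l powr a * t"
            using CD lab tpos C2 by (intro mult_right_mono mult_mono) auto
          finally show ?thesis .
        qed
        then show "step_fun m (l * x) \<le> C * l powr a * step_fun m x" unfolding s_def t_def .
      qed
    qed
  qed
qed

end

context qs begin

lemma f_evpos: "eventually (\<lambda>x. step_fun m x > 0) at_top"
  using f_mon by (rule eventually_mono) simp

lemma g_evpos: "eventually (\<lambda>x. nu m x > 0) at_top"
  using g_mon by (rule eventually_mono) simp

lemma main1: "lower_index (step_fun m) = inverse (upper_index (nu m))"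
proof -
  have e1: "{ereal b | b. \<exists>D>0. \<forall>\<Lambda>>1.
      Liminf at_top (\<lambda>x. INF l\<in>{1..\<Lambda>}. ereal (step_fun m (l * x) / (l powr b * step_fun m x))) \<ge> ereal D}
    = ereal ` {b. LB (step_fun m) b}"
    using LB_iff[OF f_evpos] by blast
  have e2: "{ereal a | a. \<exists>C>0. \<forall>\<Lambda>>1.
      Limsup at_top (\<lambda>x. SUP l\<in>{1..\<Lambda>}. ereal (nu m (l * x) / (l powr a * nu m x))) \<le> ereal C}
    = ereal ` {a. UB (nu m) a}"
    using UB_iff[OF g_evpos] by blast
  show ?thesis unfolding lower_index_def upper_index_def e1 e2
  proof (rule index_inverse)
    fix a a' assume "a \<in> {a. UB (nu m) a}" "a \<le> a'"
    then show "a' \<in> {a. UB (nu m) a}" using UB_mono g_evpos by blast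
  next
    fix a assume "a \<in> {a. UB (nu m) a}"
    then show "a \<ge> 0" using UB_nonneg g_mon by blast
  next
    show "0 \<in> {b. LB (step_fun m) b}" using LB_zero[OF f_mon] by simp
  next
    fix a b :: real assume ab: "a > 0" "b > 0" "a \<in> {a. UB (nu m) a}" "a * b < 1"
    have "a < 1 / b" using ab by (simp add: field_simps)
    then have "GUB (nu m) (1 / b)" using UB_GUB ab g_evpos by blast
    then have "LB (step_fun m) b" using L2[of "1 / b" b] ab by simp
    then show "b \<in> {b. LB (step_fun m) b}" by simp
  next
    fix a b :: real assume ab: "a > 0" "b > 0" "b \<in> {b. LB (step_fun m) b}" "a * b > 1"
    have "1 / a < b" using ab by (simp add: field_simps)
    then have "GLB (step_fun m) (1 / a)" using LB_GLB ab f_evpos by blast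
    then have "UB (nu m) a" using L1[of "1 / a"] ab by simp
    then show "a \<in> {a. UB (nu m) a}" by simp
  qed
qed

lemma main2: "upper_index (step_fun m) = inverse (lower_index (nu m))"
proof -
  have e1: "{ereal b | b. \<exists>D>0. \<forall>\<Lambda>>1.
      Liminf at_top (\<lambda>x. INF l\<in>{1..\<Lambda>}. ereal (nu m (l * x) / (l powr b * nu m x))) \<ge> ereal D}
    = ereal ` {b. LB (nu m) b}"
    using LB_iff[OF g_evpos] by blast
  have e2: "{ereal a | a. \<exists>C>0. \<forall>\<Lambda>>1.
      Limsup at_top (\<lambda>x. SUP l\<in>{1..\<Lambda>}. ereal (step_fun m (l * x) / (l powr a * step_fun m x))) \<le> ereal C}
    = ereal ` {a. UB (step_fun m) a}"
    using UB_iff[OF f_evpos] by blast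
  have "lower_index (nu m) = inverse (upper_index (step_fun m))"
    unfolding lower_index_def upper_index_def e1 e2
  proof (rule index_inverse)
    fix a a' assume "a \<in> {a. UB (step_fun m) a}" "a \<le> a'"
    then show "a' \<in> {a. UB (step_fun m) a}" using UB_mono f_evpos by blast
  next
    fix a assume "a \<in> {a. UB (step_fun m) a}"
    then show "a \<ge> 0" using UB_nonneg f_mon by blast
  next
    show "0 \<in> {b. LB (nu m) b}" using LB_zero[OF g_mon] by simp
  next
    fix a b :: real assume ab: "a > 0" "b > 0" "a \<in> {a. UB (step_fun m) a}" "a * b < 1"
    have "a < 1 / b" using ab by (simp add: field_simps)
    then have "GUB (step_fun m) (1 / b)" using UB_GUB ab f_evpos by blast
    then have "LB (nu m) b" using L3[of "1 / b" b] ab by simp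
    then show "b \<in> {b. LB (nu m) b}" by simp
  next
    fix a b :: real assume ab: "a > 0" "b > 0" "b \<in> {b. LB (nu m) b}" "a * b > 1"
    have "1 / a < b" using ab by (simp add: field_simps)
    then have "GLB (nu m) (1 / a)" using LB_GLB ab g_evpos by blast
    then have "UB (step_fun m) a" using L4[of "1 / a"] ab by simp
    then show "a \<in> {a. UB (step_fun m) a}" by simp
  qed
  moreover have "upper_index (step_fun m) \<ge> 0"
    unfolding upper_index_def e2 using UB_nonneg f_mon by (auto intro!: INF_greatest)
  ultimately show ?thesis using ereal_inv_inv[of "upper_index (step_fun m)"] by auto
qed

end

lemma ws_qs:
  assumes "weight_sequence M"
  shows "qs (quot M)"
proof -
  have M0: "M 0 = 1" and Mpos: "\<And>p. M p > 0"
    and lc: "\<And>p. p \<ge> 1 \<Longrightarrow> (M p)\<^sup>2 \<le> M (p - 1) * M (p + 1)"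
    and lim: "filterlim (\<lambda>p. root p (M p)) at_top sequentially"
    using assms unfolding weight_sequence_def by auto
  have qpos: "\<And>j. quot M j > 0" unfolding quot_def using Mpos by simp
  have qmono: "mono (quot M)"
  proof (rule incseq_SucI)
    fix j
    have "(M (Suc j))\<^sup>2 \<le> M j * M (Suc (Suc j))" using lc[of "Suc j"] by simp
    then show "quot M j \<le> quot M (Suc j)" unfolding quot_def using Mpos[of j] Mpos[of "Suc j"]
      by (simp add: field_simps power2_eq_square)
  qed
  have Mle: "M p \<le> quot M (p - 1) ^ p" for p
  proof (induction p)
    case 0
    then show ?case using M0 by simp
  next
    case (Suc p)
    have "M (Suc p) = M p * quot M p" unfolding quot_def using Mpos[of p] by simp
    also have "\<dots> \<le> quot M (p - 1) ^ p * quot M p" using Suc qpos[of p] by (intro mult_right_mono) auto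
    also have "\<dots> \<le> quot M p ^ p * quot M p"
      using qpos[of "p - 1"] monoD[OF qmono, of "p - 1" p] qpos[of p]
      by (intro mult_right_mono power_mono) auto
    finally show ?case by (simp add: mult.commute)
  qed
  have unb: "\<exists>j. t < quot M j" for t
  proof -
    have "eventually (\<lambda>p. root p (M p) > t) sequentially"
      using lim by (simp add: filterlim_at_top_dense)
    moreover have "eventually (\<lambda>p. p \<ge> (1::nat)) sequentially" by (rule eventually_ge_at_top)
    ultimately have "eventually (\<lambda>p. root p (M p) > t \<and> p \<ge> 1) sequentially" by (rule eventually_conj)
    then obtain p where p: "root p (M p) > t" "p \<ge> 1" unfolding eventually_sequentially by blast
    have "root p (M p) \<le> root p (quot M (p - 1) ^ p)" using Mle[of p] p(2) by simp
    also have "\<dots> = quot M (p - 1)" using p(2) qpos[of "p - 1"] by (simp add: real_root_power_cancel)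
    finally show ?thesis using p(1) by (intro exI[of _ "p - 1"]) simp
  qed
  show ?thesis by unfold_locales (use qpos qmono unb in auto)
qed

theorem proposition4p1:
  fixes M :: "nat \<Rightarrow> real"
  assumes "weight_sequence M"
  shows "lower_index (step_fun (quot M)) = inverse (upper_index (nu (quot M)))
    \<and> upper_index (step_fun (quot M)) = inverse (lower_index (nu (quot M)))"
  using qs.main1[OF ws_qs[OF assms]] qs.main2[OF ws_qs[OF assms]] by simp

end
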